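(* Let $C$ be a finite set of coupons with $\delta=|C|$, and let $(p_o)_{o\in C}$ be a probability distribution on $C$. Draw $m\ge 3$ coupons independently, each draw yielding coupon $o$ with probability $p_o$, and let $V$ be the set of distinct coupons obtained. Then \[E(|V|) \leq \min\left\{\frac{m}{\log_2(m)}\cdot H_C+3,\ m,\ \delta\right\},\] where $H_C=\sum_{o\in C} p_o \log_2 \frac{1}{p_o}$ is the entropy of the coupon distribution.
   Context: $E(|V|)$ denotes the expected cardinality of the random set $V$. In the entropy sum, terms with $p_o=0$ are taken to be $0$. *)

theory Defs
  imports "HOL-Probability.Probability"
begin

definition coupon_entropy :: "'a pmf \<Rightarrow> 'a set \<Rightarrow> real" where
  "coupon_entropy p C = (\<Sum>c\<in>C. if pmf p c = 0 then 0 else pmf p c * log 2 (1 / pmf p c))"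

definition draws :: "'a pmf \<Rightarrow> nat \<Rightarrow> (nat \<Rightarrow> 'a) pmf" where
  "draws p m = Pi_pmf {..<m} undefined (\<lambda>_. p)"

definition expected_distinct :: "'a pmf \<Rightarrow> nat \<Rightarrow> real" where
  "expected_distinct p m =
     measure_pmf.expectation (draws p m) (\<lambda>f. real (card (f ` {..<m})))"

end

theory Submission imports Defs begin
lemma distinct_sum:
  assumes C: "finite C" and sp: "set_pmf p \<subseteq> C"
  shows "expected_distinct p m = (\<Sum>c\<in>C. 1 - (1 - pmf p c) ^ m)"
proof -
  define D where "D = draws p m"
  have fin: "finite (set_pmf D)" unfolding D_def draws_def
    by (simp add: set_Pi_pmf finite_PiE_dflt C) (metis finite_PiE_dflt finite_lessThan finite_subset sp C)
  have eq1: "real (card (f ` {..<m})) = (\<Sum>c\<in>C. indicator {g. c \<in> g ` {..<m}} f)"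
    if "f \<in> set_pmf D" for f
  proof -
    have "f ` {..<m} \<subseteq> C" using that sp unfolding D_def draws_def
      by (auto simp: set_Pi_pmf PiE_dflt_def)
    hence "card (f ` {..<m}) = card (C \<inter> f ` {..<m})" by (simp add: Int_absorb1)
    moreover have "(\<Sum>c\<in>C. indicator {g. c \<in> g ` {..<m}} f) = (\<Sum>c\<in>C. (indicator (f ` {..<m}) c :: real))"
      by (intro sum.cong) (auto simp: indicator_def)
    moreover have "(\<Sum>c\<in>C. (indicator (f ` {..<m}) c :: real)) = real (\<Sum>c\<in>C. (indicator (f ` {..<m}) c :: nat))"
      by (simp add: of_nat_sum indicator_def)
    ultimately show ?thesis using C by (simp add: sum_indicator_eq_card)
  qed
  have "expected_distinct p m = measure_pmf.expectation D (\<lambda>f. \<Sum>c\<in>C. indicator {g. c \<in> g ` {..<m}} f)"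
    unfolding expected_distinct_def D_def[symmetric]
    by (intro integral_cong_AE) (auto simp: AE_measure_pmf_iff eq1)
  also have "\<dots> = (\<Sum>c\<in>C. measure_pmf.expectation D (indicator {g. c \<in> g ` {..<m}}))"
    by (intro Bochner_Integration.integral_sum integrable_measure_pmf_finite fin)
  also have "\<dots> = (\<Sum>c\<in>C. measure_pmf.prob D {g. c \<in> g ` {..<m}})"
    by simp
  also have "\<dots> = (\<Sum>c\<in>C. 1 - (1 - pmf p c) ^ m)"
  proof (intro sum.cong refl)
    fix c :: 'a
    have "{g. c \<in> g ` {..<m}} = UNIV - Pi {..<m} (\<lambda>_. UNIV - {c})" by auto
    hence "measure_pmf.prob D {g. c \<in> g ` {..<m}} = 1 - measure_pmf.prob D (Pi {..<m} (\<lambda>_. UNIV - {c}))"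
      using measure_pmf.prob_compl[of "Pi {..<m} (\<lambda>_. UNIV - {c})" D] by simp
    also have "measure_pmf.prob D (Pi {..<m} (\<lambda>_. UNIV - {c})) = (\<Prod>i<m. measure_pmf.prob p (UNIV - {c}))"
      unfolding D_def draws_def by (rule measure_Pi_pmf_Pi) simp
    also have "measure_pmf.prob p (UNIV - {c}) = 1 - pmf p c"
      using measure_pmf.prob_compl[of "{c}" p] by (simp add: measure_pmf_single)
    finally show "measure_pmf.prob D {g. c \<in> g ` {..<m}} = 1 - (1 - pmf p c) ^ m" by simp
  qed
  finally show ?thesis .
qed

lemma one_minus_pow_le:
  fixes q :: real assumes "0 \<le> q" "q \<le> 1"
  shows "1 - (1 - q) ^ m \<le> real m * q" "1 - (1 - q) ^ m \<le> 1" "0 \<le> 1 - (1 - q) ^ m"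
proof -
  show "1 - (1 - q) ^ m \<le> real m * q"
    using Bernoulli_inequality[of "-q" m] assms by simp
  show "1 - (1 - q) ^ m \<le> 1" using assms by simp
  show "0 \<le> 1 - (1 - q) ^ m" using assms by (simp add: power_le_one)
qed

lemma pointwise:
  fixes q :: real and m :: nat
  assumes q: "0 < q" "q \<le> 1/3" and m: "m \<ge> 3"
  shows "1 - (1 - q) ^ m \<le> real m / log 2 (real m) * (q * log 2 (1 / q))"
proof -
  have m0: "real m > 1" using m by simp
  have L: "log 2 (real m) > 0" using m0 by simp
  show ?thesis
  proof (cases "q < 1 / real m")
    case True
    have "1/q > real m" using True q m0
      by (simp add: field_simps)
    hence "log 2 (1/q) \<ge> log 2 (real m)" using m0 q by (intro log_le_cancel_iff[THEN iffD2]) auto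
    hence "real m * q \<le> real m / log 2 (real m) * (q * log 2 (1 / q))"
      using L q m0 by (simp add: field_simps)
    thus ?thesis using one_minus_pow_le(1)[of q m] q by simp
  next
    case False
    define x where "x = 1 / q"
    have x3: "3 \<le> x" using q unfolding x_def by (simp add: field_simps)
    have "1 \<le> q * real m" using False m0 by (simp add: field_simps)
    hence xm: "x \<le> real m" using q unfolding x_def by (simp add: field_simps)
    have "ln (real m) / real m \<le> ln x / x"
      using ln_x_over_x_mono[of x "real m"] exp_le x3 xm by linarith
    hence "ln (real m) \<le> real m * (ln x / x)" using m0 by (simp add: field_simps)
    hence "log 2 (real m) \<le> real m * (q * log 2 x)"
      unfolding log_def x_def using q by (simp add: field_simps divide_right_mono)
    hence "1 \<le> real m / log 2 (real m) * (q * log 2 (1 / q))"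
      using L unfolding x_def by (simp add: field_simps)
    thus ?thesis using one_minus_pow_le(2)[of q m] q by linarith
  qed
qed


theorem lemma1:
  fixes C :: "'a set" and p :: "'a pmf" and m :: nat
  assumes "finite C"
    and "set_pmf p \<subseteq> C"
    and "m \<ge> 3"
  shows "expected_distinct p m
           \<le> min (real m / log 2 (real m) * coupon_entropy p C + 3) (min (real m) (real (card C)))"
proof -
  note C = assms(1) and sp = assms(2) and m = assms(3)
  define g where "g = (\<lambda>c. 1 - (1 - pmf p c) ^ m)"
  define t where "t = (\<lambda>c. if pmf p c = 0 then 0 else pmf p c * log 2 (1 / pmf p c))"
  define K where "K = real m / log 2 (real m)"
  have E: "expected_distinct p m = sum g C" unfolding g_def by (rule distinct_sum[OF C sp])
  have q01: "0 \<le> pmf p c" "pmf p c \<le> 1" for c by (simp_all add: pmf_le_1)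
  have s1: "sum (pmf p) C = 1" by (rule sum_pmf_eq_1[OF C sp])
  have K0: "K > 0" unfolding K_def using m by simp
  have t0: "t c \<ge> 0" for c
  proof (cases "pmf p c = 0")
    case False
    hence "0 < pmf p c" using q01[of c] by simp
    hence "log 2 (1 / pmf p c) \<ge> 0" using q01[of c] by simp
    thus ?thesis unfolding t_def using q01[of c] by simp
  qed (simp add: t_def)
  have b1: "sum g C \<le> real (card C)"
    using sum_mono[of C g "\<lambda>_. 1"] one_minus_pow_le(2)[OF q01] unfolding g_def by simp
  have b2: "sum g C \<le> real m"
  proof -
    have "sum g C \<le> (\<Sum>c\<in>C. real m * pmf p c)"
      by (intro sum_mono) (simp add: g_def one_minus_pow_le(1)[OF q01])
    also have "\<dots> = real m" using s1 by (simp add: sum_distrib_left[symmetric])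
    finally show ?thesis .
  qed
  define S where "S = {c\<in>C. pmf p c > 1/3}"
  have SC: "S \<subseteq> C" unfolding S_def by auto
  have finS: "finite S" using C SC finite_subset by blast
  have cS: "card S \<le> 2"
  proof (rule ccontr)
    assume "\<not> card S \<le> 2"
    hence c3: "real (card S) \<ge> 3" by simp
    have "sum (pmf p) S \<le> sum (pmf p) C"
      by (intro sum_mono2[OF C SC]) simp
    hence "sum (pmf p) S \<le> 1" using s1 by simp
    moreover have "S \<noteq> {}" using c3 by auto
    hence "(\<Sum>c\<in>S. 1/3) < sum (pmf p) S"
      by (intro sum_strict_mono[OF finS]) (auto simp: S_def)
    ultimately show False using c3 by simp
  qed
  have gle: "g c \<le> (if c \<in> S then 1 else 0) + K * t c" if "c \<in> C" for c
  proof (cases "c \<in> S")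
    case True
    thus ?thesis using one_minus_pow_le(2)[OF q01, of c m] t0[of c] K0 unfolding g_def
      by (simp add: add_increasing2)
  next
    case False
    hence le: "pmf p c \<le> 1/3" using that unfolding S_def by auto
    show ?thesis
    proof (cases "pmf p c = 0")
      case True thus ?thesis by (simp add: g_def t_def False)
    next
      case nz: False
      hence "0 < pmf p c" using q01[of c] by simp
      from pointwise[OF this le m] show ?thesis using False nz unfolding g_def t_def K_def by simp
    qed
  qed
  have "sum g C \<le> (\<Sum>c\<in>C. (if c \<in> S then 1 else 0) + K * t c)"
    by (intro sum_mono gle)
  also have "\<dots> = real (card S) + K * sum t C"
    using C SC by (simp add: sum.distrib sum_distrib_left sum.If_cases Int_absorb1 Int_commute)
  also have "\<dots> \<le> K * coupon_entropy p C + 3"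
    using cS unfolding coupon_entropy_def t_def by simp
  finally have b3: "sum g C \<le> K * coupon_entropy p C + 3" .
  show ?thesis using E b1 b2 b3 unfolding K_def by simp
qed

end
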